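(* Let $\chi$ be a countable set and let $B \ge 1$ be an integer. Let $s:\{1,2,\dots,B\} \to (0,\infty)$ be an injective function. Then there exists a function $f:\chi\to\mathbb{R}$ such that the map $$h(X) = s(|X|)\cdot \frac{1}{|X|}\sum_{x \in X} f(x)$$ (the sum taken with multiplicity) is injective on the set of all nonempty finite multisets $X$ of elements of $\chi$ with $|X| \le B$.
   Context: $|X|$ denotes the cardinality of the multiset $X$ counted with multiplicity (the neighbourhood size / node degree). The map $h$ is the mean aggregator of $f$ composed with the degree-scaler $s$; the positivity assumption on $s$ can always be achieved from an arbitrary injective scaler by adding a constant (an affine shift), which preserves injectivity. The special case $s(d)=d$ gives the sum aggregator $\sum_{x\in X} f(x)$. *)

theory Defs
  imports "HOL-Analysis.Analysis" "HOL-Library.Multiset"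
begin

definition scaled_mean_agg :: "(nat \<Rightarrow> real) \<Rightarrow> ('a \<Rightarrow> real) \<Rightarrow> 'a multiset \<Rightarrow> real" where
  "scaled_mean_agg s f X = s (size X) * (1 / real (size X)) * (\<Sum>x\<in>#X. f x)"

end

theory Submission
  imports Defs "HOL-Computational_Algebra.Polynomial"
begin

definition Qm :: "nat multiset \<Rightarrow> real poly" where
  "Qm M = sum_mset (image_mset (monom 1) M)"

lemma poly_Qm: "poly (Qm M) x = (\<Sum>k\<in>#M. x ^ k)"
  unfolding Qm_def by (induction M) (auto simp: poly_monom)

lemma coeff_Qm: "coeff (Qm M) k = real (count M k)"
  unfolding Qm_def by (induction M) (auto simp: coeff_monom)

lemma poly_Qm_1: "poly (Qm M) 1 = real (size M)"
  unfolding poly_Qm by (induction M) auto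

lemma image_mset_inj_eq:
  assumes "image_mset f A = image_mset f B" "inj_on f (set_mset A \<union> set_mset B)"
  shows "A = B"
proof -
  from image_mset_eq_image_mset_plusD[of f A B 0] assms
  obtain C' where "A = B + C'" "0 = image_mset f C'" by auto
  then show ?thesis by auto
qed

theorem theorem2:
  fixes Chi :: "'a set" and B :: nat and s :: "nat \<Rightarrow> real"
  assumes "countable Chi"
    and "B \<ge> 1"
    and "\<And>d. d \<in> {1..B} \<Longrightarrow> s d > 0"
    and "inj_on s {1..B}"
  shows "\<exists>f :: 'a \<Rightarrow> real.
           inj_on (scaled_mean_agg s f)
             {X :: 'a multiset. set_mset X \<subseteq> Chi \<and> X \<noteq> {#} \<and> size X \<le> B}"
proof -
  define c where "c d = s d * (1 / real d)" for d
  define P where "P M N = smult (c (size M)) (Qm M) - smult (c (size N)) (Qm N)" for M N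
  define Ps where "Ps = {p. \<exists>M N. M \<noteq> N \<and> 1 \<le> size M \<and> size M \<le> B \<and> 1 \<le> size N \<and> size N \<le> B \<and> p = P M N}"
  have nz: "P M N \<noteq> 0" if "M \<noteq> N" "1 \<le> size M" "size M \<le> B" "1 \<le> size N" "size N \<le> B" for M N
  proof
    assume P0: "P M N = 0"
    have "poly (P M N) 1 = s (size M) - s (size N)"
      using that by (auto simp: P_def poly_Qm_1 c_def)
    with P0 have "s (size M) = s (size N)" by simp
    with assms(4) that have eqs: "size M = size N" by (auto dest: inj_onD)
    have cpos: "c (size M) > 0" using assms(3) that by (auto simp: c_def)
    have "count M k = count N k" for k
    proof -
      have "coeff (P M N) k = 0" using P0 by simp
      hence "c (size M) * real (count M k) = c (size M) * real (count N k)"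
        using eqs by (simp add: P_def coeff_Qm)
      thus ?thesis using cpos by simp
    qed
    with that(1) show False by (simp add: multiset_eq_iff)
  qed
  have cntP: "countable Ps"
  proof -
    have "Ps \<subseteq> (\<lambda>(a, b). P (mset a) (mset b)) ` (UNIV :: (nat list \<times> nat list) set)"
    proof
      fix p assume "p \<in> Ps"
      then obtain M N where "p = P M N" unfolding Ps_def by auto
      moreover obtain a b where "M = mset a" "N = mset b" by (metis ex_mset)
      ultimately show "p \<in> (\<lambda>(a, b). P (mset a) (mset b)) ` UNIV" by auto
    qed
    thus ?thesis by (rule countable_subset) (intro countable_image countableI_type)
  qed
  define R where "R = (\<Union>p\<in>Ps. {x. poly p x = 0})"
  have "countable R" unfolding R_def
  proof (rule countable_UN[OF cntP])
    fix p assume "p \<in> Ps"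
    then have "p \<noteq> 0" unfolding Ps_def using nz by auto
    then show "countable {x. poly p x = 0}" by (intro countable_finite poly_roots_finite)
  qed
  then obtain r :: real where r: "r \<notin> R"
    using uncountable_UNIV_real by (metis UNIV_I countable_subset subsetI)
  define g where "g = to_nat_on Chi"
  have ginj: "inj_on g Chi" unfolding g_def using assms(1) by (simp add: inj_on_to_nat_on)
  define f where "f x = r ^ g x" for x
  have sumf: "(\<Sum>x\<in>#X. f x) = poly (Qm (image_mset g X)) r" for X
    by (simp add: poly_Qm f_def image_mset.compositionality o_def)
  show ?thesis
  proof (rule exI[of _ f], rule inj_onI)
    fix X Y assume X: "X \<in> {X. set_mset X \<subseteq> Chi \<and> X \<noteq> {#} \<and> size X \<le> B}"
      and Y: "Y \<in> {X. set_mset X \<subseteq> Chi \<and> X \<noteq> {#} \<and> size X \<le> B}"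
      and h: "scaled_mean_agg s f X = scaled_mean_agg s f Y"
    show "X = Y"
    proof (rule ccontr)
      assume ne: "X \<noteq> Y"
      define M where "M = image_mset g X"
      define N where "N = image_mset g Y"
      have "M \<noteq> N"
      proof
        assume "M = N"
        moreover have "inj_on g (set_mset X \<union> set_mset Y)"
          using X Y ginj by (auto intro: inj_on_subset)
        ultimately show False using ne image_mset_inj_eq unfolding M_def N_def by blast
      qed
      moreover have "1 \<le> size M" "size M \<le> B" "1 \<le> size N" "size N \<le> B"
        using X Y by (auto simp: M_def N_def Suc_le_eq nonempty_has_size)
      ultimately have "P M N \<in> Ps" unfolding Ps_def by blast
      moreover have "poly (P M N) r = 0"
        using h by (simp add: P_def scaled_mean_agg_def sumf c_def M_def N_def)
      ultimately have "r \<in> R" unfolding R_def by blast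
      with r show False by simp
    qed
  qed
qed

end
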